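(* Every almost bipartite cubic graph $G$ with surplus edges $e$ and $f$ has a perfect matching that contains both $e$ and $f$.
   Context: A cubic graph $G$ (multiple edges and loops permitted) is almost bipartite if it is bridgeless, not bipartite, and contains two edges $e$ and $f$ such that $G-\{e,f\}$ is bipartite; such edges $e,f$ are called surplus edges of $G$. *)

theory Defs
  imports Main
begin

text \<open>A finite multigraph (loops and parallel edges allowed) is given by a vertex set V,
an edge set E, and endpoint maps s and t (each edge e joins s e and t e; e is a loop iff
s e = t e).\<close>

definition multigraph :: "'v set \<Rightarrow> 'e set \<Rightarrow> ('e \<Rightarrow> 'v) \<Rightarrow> ('e \<Rightarrow> 'v) \<Rightarrow> bool" where
  "multigraph V E s t \<longleftrightarrow> finite V \<and> finite E \<and> (\<forall>e\<in>E. s e \<in> V \<and> t e \<in> V)"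

text \<open>Degree; a loop contributes 2.\<close>
definition degree :: "'e set \<Rightarrow> ('e \<Rightarrow> 'v) \<Rightarrow> ('e \<Rightarrow> 'v) \<Rightarrow> 'v \<Rightarrow> nat" where
  "degree E s t v = card {e\<in>E. s e = v} + card {e\<in>E. t e = v}"

definition cubic :: "'v set \<Rightarrow> 'e set \<Rightarrow> ('e \<Rightarrow> 'v) \<Rightarrow> ('e \<Rightarrow> 'v) \<Rightarrow> bool" where
  "cubic V E s t \<longleftrightarrow> multigraph V E s t \<and> (\<forall>v\<in>V. degree E s t v = 3)"

definition adj :: "'e set \<Rightarrow> ('e \<Rightarrow> 'v) \<Rightarrow> ('e \<Rightarrow> 'v) \<Rightarrow> 'v \<Rightarrow> 'v \<Rightarrow> bool" where
  "adj F s t u v \<longleftrightarrow> (\<exists>e\<in>F. (s e = u \<and> t e = v) \<or> (s e = v \<and> t e = u))"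

definition reachable :: "'e set \<Rightarrow> ('e \<Rightarrow> 'v) \<Rightarrow> ('e \<Rightarrow> 'v) \<Rightarrow> 'v \<Rightarrow> 'v \<Rightarrow> bool" where
  "reachable F s t = (adj F s t)\<^sup>*\<^sup>*"

definition is_bridge :: "'e set \<Rightarrow> ('e \<Rightarrow> 'v) \<Rightarrow> ('e \<Rightarrow> 'v) \<Rightarrow> 'e \<Rightarrow> bool" where
  "is_bridge E s t e \<longleftrightarrow> e \<in> E \<and> \<not> reachable (E - {e}) s t (s e) (t e)"

definition bridgeless :: "'e set \<Rightarrow> ('e \<Rightarrow> 'v) \<Rightarrow> ('e \<Rightarrow> 'v) \<Rightarrow> bool" where
  "bridgeless E s t \<longleftrightarrow> (\<forall>e\<in>E. \<not> is_bridge E s t e)"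

text \<open>The spanning subgraph (V, F) is bipartite: a 2-colouring of V with every edge of F
joining the two colour classes (so loops are excluded).\<close>
definition bipartite :: "'v set \<Rightarrow> 'e set \<Rightarrow> ('e \<Rightarrow> 'v) \<Rightarrow> ('e \<Rightarrow> 'v) \<Rightarrow> bool" where
  "bipartite V F s t \<longleftrightarrow> (\<exists>A\<subseteq>V. \<forall>e\<in>F. (s e \<in> A \<longleftrightarrow> t e \<notin> A))"

definition almost_bipartite_with :: "'v set \<Rightarrow> 'e set \<Rightarrow> ('e \<Rightarrow> 'v) \<Rightarrow> ('e \<Rightarrow> 'v) \<Rightarrow> 'e \<Rightarrow> 'e \<Rightarrow> bool" where
  "almost_bipartite_with V E s t e f \<longleftrightarrow>
     cubic V E s t \<and> bridgeless E s t \<and> \<not> bipartite V E s t \<and>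
     e \<in> E \<and> f \<in> E \<and> e \<noteq> f \<and> bipartite V (E - {e, f}) s t"

definition perfect_matching :: "'v set \<Rightarrow> 'e set \<Rightarrow> ('e \<Rightarrow> 'v) \<Rightarrow> ('e \<Rightarrow> 'v) \<Rightarrow> 'e set \<Rightarrow> bool" where
  "perfect_matching V E s t M \<longleftrightarrow> M \<subseteq> E \<and> (\<forall>e\<in>M. s e \<noteq> t e) \<and>
     (\<forall>v\<in>V. card {e\<in>M. s e = v \<or> t e = v} = 1)"

end

theory Submission
  imports Defs
begin


lemma hall:
  fixes I :: "'i set" and A :: "'i \<Rightarrow> 'b set"
  assumes "finite I" "\<forall>i\<in>I. finite (A i)" "\<forall>J\<subseteq>I. card J \<le> card (\<Union>(A ` J))"
  shows "\<exists>R. inj_on R I \<and> (\<forall>i\<in>I. R i \<in> A i)"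
  using assms
proof (induction "card I" arbitrary: I A rule: less_induct)
  case less
  note fin = less.prems(1) and finA = less.prems(2) and H = less.prems(3)
  have finU: "finite (\<Union>(A ` J))" if "J \<subseteq> I" for J
    using that fin finA by (meson finite_UN_I finite_subset subsetD)
  show ?case
  proof (cases "I = {}")
    case True then show ?thesis by auto
  next
    case False
    show ?thesis
    proof (cases "\<forall>J. J \<subseteq> I \<and> J \<noteq> {} \<and> J \<noteq> I \<longrightarrow> card J < card (\<Union>(A ` J))")
      case True
      obtain i0 where i0: "i0 \<in> I" using False by auto
      have "card {i0} \<le> card (A i0)" using H i0 by auto
      then have "A i0 \<noteq> {}" by auto
      then obtain x where x: "x \<in> A i0" by auto
      define I' where "I' = I - {i0}"
      define A' where "A' = (\<lambda>i. A i - {x})"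
      have lt: "card I' < card I" unfolding I'_def using i0 fin
        by (meson card_Diff1_less)
      have H': "\<forall>J\<subseteq>I'. card J \<le> card (\<Union>(A' ` J))"
      proof (intro allI impI)
        fix J assume J: "J \<subseteq> I'"
        show "card J \<le> card (\<Union>(A' ` J))"
        proof (cases "J = {}")
          case True then show ?thesis by simp
        next
          case False
          have "J \<subseteq> I" "J \<noteq> I" using J i0 unfolding I'_def by auto
          then have c: "card J < card (\<Union>(A ` J))" using True False by blast
          have eq: "\<Union>(A' ` J) = \<Union>(A ` J) - {x}" unfolding A'_def by auto
          have "card (\<Union>(A ` J)) - 1 \<le> card (\<Union>(A ` J) - {x})"
            by (simp add: card_Diff_singleton_if)
          then show ?thesis using c eq by simp
        qed
      qed
      have "finite I'" using fin unfolding I'_def by auto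
      moreover have "\<forall>i\<in>I'. finite (A' i)" using finA unfolding A'_def I'_def by auto
      ultimately obtain R' where R': "inj_on R' I'" "\<forall>i\<in>I'. R' i \<in> A' i"
        using less.hyps[OF lt _ _ H'] by blast
      define R where "R = R'(i0 := x)"
      have "inj_on R I"
      proof -
        have "I = insert i0 I'" using i0 unfolding I'_def by auto
        moreover have "inj_on R I'" using R'(1) unfolding R_def I'_def
          by (simp add: inj_on_def)
        moreover have "R i0 \<notin> R ` I'" using R'(2) unfolding R_def A'_def I'_def by auto
        moreover have "I' - {i0} = I'" by (auto simp: I'_def)
        ultimately show ?thesis using inj_on_insert[of R i0 I'] by metis
      qed
      moreover have "\<forall>i\<in>I. R i \<in> A i" using R'(2) x unfolding R_def A'_def I'_def by auto
      ultimately show ?thesis by blast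
    next
      case False2: False
      then obtain J where J: "J \<subseteq> I" "J \<noteq> {}" "J \<noteq> I" "card J \<ge> card (\<Union>(A ` J))"
        by (meson not_less)
      define U where "U = \<Union>(A ` J)"
      have cJ: "card J = card U" using J H unfolding U_def by (meson le_antisym)
      have lt1: "card J < card I" using J fin by (meson psubsetI psubset_card_mono)
      have fJ: "finite J" using J fin finite_subset by auto
      have fJA: "\<forall>i\<in>J. finite (A i)" using finA J(1) by blast
      have HJ: "\<forall>K\<subseteq>J. card K \<le> card (\<Union>(A ` K))" using H J(1) by blast
      obtain R1 where R1: "inj_on R1 J" "\<forall>i\<in>J. R1 i \<in> A i"
        using less.hyps[OF lt1 fJ fJA HJ] by blast
      define I2 where "I2 = I - J"
      define A2 where "A2 = (\<lambda>i. A i - U)"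
      have "I2 \<subset> I" unfolding I2_def using J by blast
      then have lt2: "card I2 < card I" using fin by (meson psubset_card_mono)
      have H2: "\<forall>K\<subseteq>I2. card K \<le> card (\<Union>(A2 ` K))"
      proof (intro allI impI)
        fix K assume K: "K \<subseteq> I2"
        have KJ: "K \<union> J \<subseteq> I" using K J unfolding I2_def by auto
        have fK: "finite K" using K fin unfolding I2_def using finite_subset by auto
        have e1: "\<Union>(A2 ` K) = \<Union>(A ` (K \<union> J)) - U" unfolding A2_def U_def by auto
        have sub: "U \<subseteq> \<Union>(A ` (K \<union> J))" unfolding U_def by auto
        have c1: "card (\<Union>(A2 ` K)) = card (\<Union>(A ` (K \<union> J))) - card U"
          using e1 sub finU[OF KJ] by (simp add: card_Diff_subset finite_subset)
        have c2: "card (K \<union> J) = card K + card J"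
          using K fK fJ unfolding I2_def by (subst card_Un_disjoint) auto
        have "card (K \<union> J) \<le> card (\<Union>(A ` (K \<union> J)))" using H KJ by blast
        then show "card K \<le> card (\<Union>(A2 ` K))" using c1 c2 cJ by linarith
      qed
      obtain R2 where R2: "inj_on R2 I2" "\<forall>i\<in>I2. R2 i \<in> A2 i"
        using less.hyps[OF lt2 _ _ H2] fin finA unfolding I2_def A2_def by auto
      define R where "R = (\<lambda>i. if i \<in> J then R1 i else R2 i)"
      have "inj_on R I"
        unfolding inj_on_def
      proof (intro ballI impI)
        fix i j assume ij: "i \<in> I" "j \<in> I" "R i = R j"
        show "i = j"
        proof (cases "i \<in> J"; cases "j \<in> J")
          assume "i \<in> J" "j \<in> J" then show ?thesis using ij R1(1) unfolding R_def inj_on_def by auto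
        next
          assume a: "i \<in> J" "j \<notin> J"
          then have "R i \<in> U" using R1(2) unfolding R_def U_def by auto
          moreover have "R j \<notin> U" using a ij(2) R2(2) unfolding R_def A2_def I2_def by auto
          ultimately show ?thesis using ij by auto
        next
          assume a: "i \<notin> J" "j \<in> J"
          then have "R j \<in> U" using R1(2) unfolding R_def U_def by auto
          moreover have "R i \<notin> U" using a ij(1) R2(2) unfolding R_def A2_def I2_def by auto
          ultimately show ?thesis using ij by auto
        next
          assume "i \<notin> J" "j \<notin> J" then show ?thesis using ij R2(1) unfolding R_def inj_on_def I2_def by auto
        qed
      qed
      moreover have "\<forall>i\<in>I. R i \<in> A i" using R1(2) R2(2) unfolding R_def A2_def I2_def by auto
      ultimately show ?thesis by blast
    qed
  qed
qed



definition ind :: "bool \<Rightarrow> nat" where "ind b = (if b then 1 else 0)"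

lemma deg_sum:
  assumes "cubic V E s t" "X \<subseteq> V"
  shows "3 * card X = (\<Sum>g\<in>E. ind (s g \<in> X) + ind (t g \<in> X))"
proof -
  have fE: "finite E" and fV: "finite V" using assms(1) unfolding cubic_def multigraph_def by auto
  have fX: "finite X" using fV assms(2) finite_subset by auto
  have c: "card {g\<in>E. P g} = (\<Sum>g\<in>E. ind (P g))" for P
    using fE by (simp add: ind_def sum.inter_filter[symmetric])
  have "(\<Sum>v\<in>X. degree E s t v) = (\<Sum>v\<in>X. 3)"
    using assms unfolding cubic_def by (intro sum.cong) auto
  then have "3 * card X = (\<Sum>v\<in>X. degree E s t v)" by simp
  also have "\<dots> = (\<Sum>v\<in>X. \<Sum>g\<in>E. ind (s g = v) + ind (t g = v))"
    unfolding degree_def c by (simp add: sum.distrib)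
  also have "\<dots> = (\<Sum>g\<in>E. \<Sum>v\<in>X. ind (s g = v) + ind (t g = v))"
    by (rule sum.swap)
  also have "\<dots> = (\<Sum>g\<in>E. ind (s g \<in> X) + ind (t g \<in> X))"
  proof (rule sum.cong[OF refl])
    fix g
    have "(\<Sum>v\<in>X. ind (s g = v)) = ind (s g \<in> X)" "(\<Sum>v\<in>X. ind (t g = v)) = ind (t g \<in> X)"
      using fX by (simp_all add: ind_def)
    then show "(\<Sum>v\<in>X. ind (s g = v) + ind (t g = v)) = ind (s g \<in> X) + ind (t g \<in> X)"
      by (simp add: sum.distrib)
  qed
  finally show ?thesis .
qed

definition cut :: "'e set \<Rightarrow> ('e \<Rightarrow> 'v) \<Rightarrow> ('e \<Rightarrow> 'v) \<Rightarrow> 'v set \<Rightarrow> 'e set" where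
  "cut E s t X = {g\<in>E. (s g \<in> X) \<noteq> (t g \<in> X)}"

lemma cut_count:
  assumes "cubic V E s t" "X \<subseteq> V"
  shows "3 * card X = card (cut E s t X) + 2 * card {g\<in>E. s g \<in> X \<and> t g \<in> X}"
proof -
  have fE: "finite E" using assms(1) unfolding cubic_def multigraph_def by auto
  have c: "card {g\<in>E. P g} = (\<Sum>g\<in>E. ind (P g))" for P
    using fE by (simp add: ind_def sum.inter_filter[symmetric])
  have "(\<Sum>g\<in>E. ind (s g \<in> X) + ind (t g \<in> X)) =
        (\<Sum>g\<in>E. ind ((s g \<in> X) \<noteq> (t g \<in> X)) + 2 * ind (s g \<in> X \<and> t g \<in> X))"
    by (rule sum.cong) (auto simp: ind_def)
  then show ?thesis using deg_sum[OF assms] unfolding cut_def c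
    by (simp add: sum.distrib sum_distrib_left)
qed

lemma reach_pres:
  assumes "reachable F s t u w" "\<forall>g\<in>F. (s g \<in> X) = (t g \<in> X)"
  shows "(u \<in> X) = (w \<in> X)"
  using assms(1) unfolding reachable_def
proof (induction rule: rtranclp_induct)
  case base then show ?case by simp
next
  case (step y z)
  then show ?case using assms(2) unfolding adj_def by auto
qed

lemma cut1_bridge:
  assumes "card (cut E s t X) = 1"
  shows "\<not> bridgeless E s t"
proof -
  obtain h where h: "cut E s t X = {h}" using assms card_1_singletonE by blast
  then have hE: "h \<in> E" and hx: "(s h \<in> X) \<noteq> (t h \<in> X)" unfolding cut_def by auto
  have "\<forall>g\<in>E - {h}. (s g \<in> X) = (t g \<in> X)" using h unfolding cut_def by auto
  then have "\<not> reachable (E - {h}) s t (s h) (t h)" using reach_pres[of "E-{h}" s t "s h" "t h" X] hx by blast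
  then show ?thesis unfolding bridgeless_def is_bridge_def using hE by auto
qed

lemma noloop:
  assumes "cubic V E s t" "bridgeless E s t" "g \<in> E"
  shows "s g \<noteq> t g"
proof
  assume eq: "s g = t g"
  have sV: "s g \<in> V" using assms unfolding cubic_def multigraph_def by auto
  have fE: "finite E" using assms(1) unfolding cubic_def multigraph_def by auto
  have gin: "g \<in> {h\<in>E. s h \<in> {s g} \<and> t h \<in> {s g}}" using eq assms(3) by auto
  then have "card {h\<in>E. s h \<in> {s g} \<and> t h \<in> {s g}} \<ge> 1"
  proof -
    have "finite {h\<in>E. s h \<in> {s g} \<and> t h \<in> {s g}}" using fE by simp
    then show ?thesis using gin card_gt_0_iff by (metis One_nat_def Suc_leI empty_iff)
  qed
  moreover have "card (cut E s t {s g}) \<noteq> 1" using cut1_bridge assms(2) by blast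
  moreover have "3 * card {s g} = card (cut E s t {s g}) + 2 * card {h\<in>E. s h \<in> {s g} \<and> t h \<in> {s g}}"
    using cut_count[OF assms(1)] sV by blast
  moreover have "\<And>x y::nat. x + 2*y = 3 \<Longrightarrow> y \<ge> 1 \<Longrightarrow> x = 1" by presburger
  ultimately show False by simp
qed



lemma aux:
  fixes a b n p1 p2 p3 p4 q1 q2 q3 q4 :: nat
  assumes "3*a = n + p1 + p2 + p3 + p4" "3*b = n + q1 + q2 + q3 + q4"
    "p1 + q1 = 1" "p2 + q2 = 1" "p3 + q3 = 1" "p4 + q4 = 1"
  shows "p1 + p2 + p3 + p4 = 2"
proof -
  define k where "k = p1 + p2 + p3 + p4"
  have k4: "k \<le> 4" using assms(3-6) unfolding k_def by linarith
  have e1: "3*a = n + k" using assms(1) unfolding k_def by linarith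
  have e2: "3*b + k = n + 4" using assms(2-6) unfolding k_def by linarith
  have "3*a + 4 = 3*b + 2*k" using e1 e2 by linarith
  then have "k = 2" using k4 by presburger
  then show ?thesis unfolding k_def .
qed

lemma aux2:
  fixes a b c d :: nat
  assumes "int (3 * a) - int (3 * b) = - int c - 2" "b = d + 2" "\<not> a \<le> d"
  shows "c = 1"
proof -
  have e: "3*a + c = 3*d + 4" using assms(1,2) by linarith
  then have "c \<le> 1" using assms(3) by linarith
  moreover have "c \<noteq> 0"
  proof
    assume "c = 0"
    then have "3*a = 3*d + 4" using e by simp
    then show False by presburger
  qed
  ultimately show ?thesis by linarith
qed

theorem proposition4p3:
  fixes V :: "'v set" and E :: "'e set" and s t :: "'e \<Rightarrow> 'v" and e f :: 'e
  assumes "almost_bipartite_with V E s t e f"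
  shows "\<exists>M. perfect_matching V E s t M \<and> e \<in> M \<and> f \<in> M"
proof -
  from assms have cub: "cubic V E s t" and bl: "bridgeless E s t" and nb: "\<not> bipartite V E s t"
    and eE: "e \<in> E" and fE: "f \<in> E" and ef: "e \<noteq> f" and bip: "bipartite V (E - {e, f}) s t"
    unfolding almost_bipartite_with_def by auto
  have finE: "finite E" and finV: "finite V" and endV: "\<forall>g\<in>E. s g \<in> V \<and> t g \<in> V"
    using cub unfolding cubic_def multigraph_def by auto
  define E' where "E' = E - {e,f}"
  have cnt: "3 * card X = card E' + ind (s e \<in> X) + ind (t e \<in> X) + ind (s f \<in> X) + ind (t f \<in> X)"
    if "X \<subseteq> V" "\<forall>g\<in>E'. (s g \<in> X) \<noteq> (t g \<in> X)" for X
  proof -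
    have "(\<Sum>g\<in>E. ind (s g \<in> X) + ind (t g \<in> X)) = (\<Sum>g\<in>E'. ind (s g \<in> X) + ind (t g \<in> X)) + (\<Sum>g\<in>{e,f}. ind (s g \<in> X) + ind (t g \<in> X))"
      unfolding E'_def using finE eE fE by (intro sum.subset_diff) auto
    also have "(\<Sum>g\<in>E'. ind (s g \<in> X) + ind (t g \<in> X)) = (\<Sum>g\<in>E'. 1)"
      using that(2) by (intro sum.cong) (auto simp: ind_def)
    also have "(\<Sum>g\<in>{e,f}. ind (s g \<in> X) + ind (t g \<in> X)) = ind (s e \<in> X) + ind (t e \<in> X) + ind (s f \<in> X) + ind (t f \<in> X)"
      using ef by simp
    finally show ?thesis using deg_sum[OF cub that(1)] by simp
  qed
  obtain A0 where A0: "A0 \<subseteq> V" "\<forall>g\<in>E'. (s g \<in> A0) \<noteq> (t g \<in> A0)"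
    using bip unfolding bipartite_def E'_def by auto
  have B0: "V - A0 \<subseteq> V" "\<forall>g\<in>E'. (s g \<in> V - A0) \<noteq> (t g \<in> V - A0)"
    using A0 endV unfolding E'_def by auto
  have ev: "s e \<in> V" "t e \<in> V" "s f \<in> V" "t f \<in> V" using endV eE fE by auto
  note c1 = cnt[OF A0] and c2 = cnt[OF B0]
  have arith1: "\<And>a b n::nat. 3*a = n + 3 \<Longrightarrow> 3*b = n+1 \<Longrightarrow> False" by presburger
  have arith2: "\<And>a b n::nat. 3*a = n + 4 \<Longrightarrow> 3*b = n \<Longrightarrow> False" by presburger
  obtain A where A: "A \<subseteq> V" "\<forall>g\<in>E'. (s g \<in> A) \<noteq> (t g \<in> A)" "s e \<in> A" "t e \<in> A" "s f \<notin> A" "t f \<notin> A"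
  proof -
    consider (both) "(s e \<in> A0) \<noteq> (t e \<in> A0)" "(s f \<in> A0) \<noteq> (t f \<in> A0)"
      | (a) "s e \<in> A0" "t e \<in> A0" "s f \<notin> A0" "t f \<notin> A0"
      | (b) "s e \<notin> A0" "t e \<notin> A0" "s f \<in> A0" "t f \<in> A0"
    proof -
      have i: "ind (x \<in> A0) + ind (x \<in> V - A0) = 1" if "x \<in> V" for x
        using that by (simp add: ind_def)
      have "ind (s e \<in> A0) + ind (t e \<in> A0) + ind (s f \<in> A0) + ind (t f \<in> A0) = 2"
        by (rule aux[OF c1 c2 i[OF ev(1)] i[OF ev(2)] i[OF ev(3)] i[OF ev(4)]])
      then show ?thesis using that
        by (cases "s e \<in> A0"; cases "t e \<in> A0"; cases "s f \<in> A0"; cases "t f \<in> A0")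
           (simp_all add: ind_def)
    qed
    then show ?thesis
    proof cases
      case both
      have "bipartite V E s t" unfolding bipartite_def
        using A0 both unfolding E'_def by blast
      then show ?thesis using nb by blast
    next
      case a then show ?thesis using that A0 by blast
    next
      case b then show ?thesis using that B0 ev by blast
    qed
  qed

  define B where "B = V - A"
  have AB: "\<forall>g\<in>E'. (s g \<in> A \<and> t g \<in> B) \<or> (s g \<in> B \<and> t g \<in> A)"
    using A(2) endV unfolding B_def E'_def by auto
  have BB: "B \<subseteq> V" "\<forall>g\<in>E'. (s g \<in> B) \<noteq> (t g \<in> B)"
    using A(2) endV unfolding B_def E'_def by auto
  have nle: "s e \<noteq> t e" "s f \<noteq> t f" using noloop[OF cub bl] eE fE by auto
  have fB: "s f \<in> B" "t f \<in> B" using A ev unfolding B_def by auto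
  have cAB: "card A = card B"
    using cnt[OF A(1,2)] cnt[OF BB] A(3-6) fB unfolding B_def by (simp add: ind_def)
  have finA: "finite A" and finB: "finite B" using A(1) BB(1) finV finite_subset by auto
  define A' where "A' = A - {s e, t e}"
  define B' where "B' = B - {s f, t f}"
  have cA': "card A' = card B'"
    unfolding A'_def B'_def using cAB nle A(3,4) fB finA finB
    by (simp add: card_Diff_subset)
  have finA': "finite A'" and finB': "finite B'" using finA finB unfolding A'_def B'_def by auto
  define N where "N v = {w\<in>B'. \<exists>g\<in>E'. (s g = v \<and> t g = w) \<or> (s g = w \<and> t g = v)}" for v
  have hallc: "\<forall>S\<subseteq>A'. card S \<le> card (\<Union>(N ` S))"
  proof (intro allI impI)
    fix S assume S: "S \<subseteq> A'"
    show "card S \<le> card (\<Union>(N ` S))"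
    proof (rule ccontr)
      assume lt: "\<not> card S \<le> card (\<Union>(N ` S))"
      define T where "T = \<Union>(N ` S)"
      define T' where "T' = insert (s f) (insert (t f) T)"
      define X where "X = S \<union> T'"
      have TB': "T \<subseteq> B'" unfolding T_def N_def by auto
      have fT: "finite T" using TB' finB' finite_subset by auto
      have "s f \<notin> T" "t f \<notin> T" using TB' unfolding B'_def by auto
      then have cT': "card T' = card T + 2"
        unfolding T'_def using fT nle by (simp add: card_insert_if)
      have SV: "S \<subseteq> V" and SA: "S \<subseteq> A" using S A(1) unfolding A'_def by auto
      have TV: "T' \<subseteq> V" and TA: "\<forall>x\<in>T'. x \<notin> A"
        using TB' fB unfolding T'_def B'_def B_def by auto
      have SE: "s e \<notin> S" "t e \<notin> S" "s f \<notin> S" "t f \<notin> S"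
        using S fB unfolding A'_def B_def by auto
      have key1: "t g \<in> T'" if "g \<in> E'" "s g \<in> S" for g
      proof (cases "t g \<in> {s f, t f}")
        case True then show ?thesis unfolding T'_def by auto
      next
        case False
        have "t g \<in> B" using AB that SA unfolding B_def by auto
        then have "t g \<in> N (s g)" unfolding N_def B'_def using False that by auto
        then show ?thesis unfolding T'_def T_def using that by auto
      qed
      have key2: "s g \<in> T'" if "g \<in> E'" "t g \<in> S" for g
      proof (cases "s g \<in> {s f, t f}")
        case True then show ?thesis unfolding T'_def by auto
      next
        case False
        have "s g \<in> B" using AB that SA unfolding B_def by auto
        then have "s g \<in> N (t g)" unfolding N_def B'_def using False that by auto
        then show ?thesis unfolding T'_def T_def using that by auto
      qed
      have per: "int (ind (s g \<in> S) + ind (t g \<in> S)) - int (ind (s g \<in> T') + ind (t g \<in> T'))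
          = - int (ind (g \<in> cut E s t X)) - (if g = f then 2 else 0)" if gE: "g \<in> E" for g
      proof -
        consider "g = e" | "g = f" | "g \<in> E'" using gE unfolding E'_def by auto
        then show ?thesis
        proof cases
          case 1
          then show ?thesis using SE A(3,4) TA ef unfolding X_def cut_def ind_def by auto
        next
          case 2
          then show ?thesis using SE ef unfolding X_def cut_def ind_def T'_def by auto
        next
          case 3
          have gnf: "g \<noteq> f" using 3 unfolding E'_def by auto
          from AB 3 consider "s g \<in> A" "t g \<in> B" | "s g \<in> B" "t g \<in> A" by auto
          then show ?thesis
          proof cases
            case 1
            have "t g \<notin> S" using 1 SA unfolding B_def by auto
            moreover have "s g \<notin> T'" using 1 TA by auto
            ultimately show ?thesis using key1[OF 3] gnf gE unfolding X_def cut_def ind_def by auto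
          next
            case 2
            have "s g \<notin> S" using 2 SA unfolding B_def by auto
            moreover have "t g \<notin> T'" using 2 TA by auto
            ultimately show ?thesis using key2[OF 3] gnf gE unfolding X_def cut_def ind_def by auto
          qed
        qed
      qed
      have ccut: "card (cut E s t X) = (\<Sum>g\<in>E. ind (g \<in> cut E s t X))"
      proof -
        have "cut E s t X = {g\<in>E. g \<in> cut E s t X}" unfolding cut_def by auto
        then show ?thesis using finE by (simp add: ind_def sum.inter_filter[symmetric])
      qed
      have "int (3 * card S) - int (3 * card T') =
            (\<Sum>g\<in>E. int (ind (s g \<in> S) + ind (t g \<in> S)) - int (ind (s g \<in> T') + ind (t g \<in> T')))"
        unfolding deg_sum[OF cub SV] deg_sum[OF cub TV] by (simp add: sum_subtractf)
      also have "\<dots> = (\<Sum>g\<in>E. - int (ind (g \<in> cut E s t X)) - (if g = f then 2 else 0))"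
        using per by (rule sum.cong[OF refl])
      also have "\<dots> = - int (card (cut E s t X)) - 2"
        using finE fE unfolding ccut by (simp add: sum_subtractf sum_negf)
      finally have "int (3 * card S) - int (3 * card T') = - int (card (cut E s t X)) - 2" .
      then have "card (cut E s t X) = 1" using aux2[OF _ cT'[unfolded T_def] lt] by blast
      then show False using cut1_bridge bl by blast
    qed
  qed
  have finN: "\<forall>v\<in>A'. finite (N v)" using finB' unfolding N_def by auto
  obtain R where R: "inj_on R A'" "\<forall>v\<in>A'. R v \<in> N v"
    using hall[OF finA' finN hallc] by blast
  have RB: "R ` A' = B'"
  proof (rule card_subset_eq[OF finB'])
    show "R ` A' \<subseteq> B'" using R(2) unfolding N_def by auto
    show "card (R ` A') = card B'" using R(1) cA' by (simp add: card_image)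
  qed
  define G where "G v = (SOME g. g \<in> E' \<and> ((s g = v \<and> t g = R v) \<or> (s g = R v \<and> t g = v)))" for v
  have G: "G v \<in> E' \<and> ((s (G v) = v \<and> t (G v) = R v) \<or> (s (G v) = R v \<and> t (G v) = v))"
    if "v \<in> A'" for v
  proof -
    have "\<exists>g. g \<in> E' \<and> ((s g = v \<and> t g = R v) \<or> (s g = R v \<and> t g = v))"
      using R(2) that unfolding N_def by blast
    then show ?thesis unfolding G_def by (rule someI_ex)
  qed
  define M where "M = {e, f} \<union> G ` A'"
  have A'A: "A' \<subseteq> A" and B'B: "B' \<subseteq> B" unfolding A'_def B'_def by auto
  have RBv: "R v \<in> B" if "v \<in> A'" for v using RB that B'B by auto
  have disj: "x \<notin> B" if "x \<in> A" for x using that unfolding B_def by auto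
  have touch: "{g\<in>M. s g = v \<or> t g = v} = {x}" if "x \<in> M" "s x = v \<or> t x = v"
      "\<And>g. g \<in> M \<Longrightarrow> s g = v \<or> t g = v \<Longrightarrow> g = x" for x v
  proof (intro equalityI subsetI)
    fix g assume "g \<in> {g\<in>M. s g = v \<or> t g = v}"
    then show "g \<in> {x}" using that(3) by blast
  next
    fix g assume "g \<in> {x}"
    then show "g \<in> {g\<in>M. s g = v \<or> t g = v}" using that(1,2) by blast
  qed
  show ?thesis
  proof (rule exI[of _ M], intro conjI)
    show "e \<in> M" "f \<in> M" unfolding M_def by auto
    show "perfect_matching V E s t M" unfolding perfect_matching_def
    proof (intro conjI ballI)
      show ME: "M \<subseteq> E" unfolding M_def using eE fE G unfolding E'_def by auto
      fix g assume "g \<in> M" then show "s g \<noteq> t g" using noloop[OF cub bl] ME by auto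
    next
      fix v assume vV: "v \<in> V"
      have "V = {s e, t e} \<union> {s f, t f} \<union> A' \<union> B'"
        using A(1,3,4) fB unfolding A'_def B'_def B_def by auto
      then consider "v \<in> {s e, t e}" | "v \<in> {s f, t f}" | "v \<in> A'" | "v \<in> B'" using vV by blast
      then have "{g\<in>M. s g = v \<or> t g = v} = {e} \<or> {g\<in>M. s g = v \<or> t g = v} = {f} \<or>
                 (\<exists>w\<in>A'. {g\<in>M. s g = v \<or> t g = v} = {G w})"
      proof cases
        case 1
        have "{g\<in>M. s g = v \<or> t g = v} = {e}"
        proof (rule touch)
          show "e \<in> M" unfolding M_def by auto
          show "s e = v \<or> t e = v" using 1 by auto
          fix g assume "g \<in> M" "s g = v \<or> t g = v"
          then show "g = e" using 1 G fB RBv disj A(3,4) unfolding M_def A'_def by fastforce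
        qed
        then show ?thesis by blast
      next
        case 2
        have "{g\<in>M. s g = v \<or> t g = v} = {f}"
        proof (rule touch)
          show "f \<in> M" unfolding M_def by auto
          show "s f = v \<or> t f = v" using 2 by auto
          fix g assume "g \<in> M" "s g = v \<or> t g = v"
          then show "g = f" using 2 G fB A'A disj A(3,4) RB unfolding M_def B'_def by fastforce
        qed
        then show ?thesis by blast
      next
        case 3
        have "{g\<in>M. s g = v \<or> t g = v} = {G v}"
        proof (rule touch)
          show "G v \<in> M" unfolding M_def using 3 by auto
          show "s (G v) = v \<or> t (G v) = v" using G[OF 3] by auto
          fix g assume "g \<in> M" "s g = v \<or> t g = v"
          then show "g = G v" using 3 G fB RBv A'A disj unfolding M_def A'_def by fastforce
        qed
        then show ?thesis using 3 by blast
      next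
        case 4
        then obtain w where w: "w \<in> A'" "v = R w" using RB by auto
        have "{g\<in>M. s g = v \<or> t g = v} = {G w}"
        proof (rule touch)
          show "G w \<in> M" unfolding M_def using w by auto
          show "s (G w) = v \<or> t (G w) = v" using G[OF w(1)] w by auto
          fix g assume gM: "g \<in> M" and gv: "s g = v \<or> t g = v"
          show "g = G w"
          proof -
            consider "g = e" | "g = f" | w' where "w' \<in> A'" "g = G w'" using gM unfolding M_def by auto
            then show ?thesis
            proof cases
              case 1 then show ?thesis using gv 4 A(3,4) disj B'B by auto
            next
              case 2 then show ?thesis using gv 4 unfolding B'_def by auto
            next
              case 3
              have "v \<noteq> w'" using 3 4 A'A B'B disj by auto
              then have "R w' = v" using G[OF 3(1)] gv 3(2) by auto
              then have "w' = w" using R(1) w 3(1) unfolding inj_on_def by auto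
              then show ?thesis using 3 by auto
            qed
          qed
        qed
        then show ?thesis using w by blast
      qed
      then show "card {g\<in>M. s g = v \<or> t g = v} = 1" by auto
    qed
  qed
qed

end
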